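(* Assume (A3) and (A4), and let $\rho\in[0,\epsilon]$. Then for all $x\in R\mathbb{B}$, $$\mathrm{dist}(x,\mathcal{X}_\rho)\le\frac{1}{\sigma}[g(x)+\rho]_+ .$$
   Context: Let $g:\mathbb{R}^d\to\mathbb{R}$ be convex with subdifferential $\partial g(x)$. Let $R>0$ and $\mathbb{B}=\{x\in\mathbb{R}^d:\|x\|\le1\}$, with $\|\cdot\|$ the Euclidean norm. Set $\mathcal{X}=\{x:g(x)\le0\}$ and assume $\mathcal{X}\subseteq R\mathbb{B}$. For $\rho\ge0$ set $\mathcal{X}_\rho=\{x:g(x)\le-\rho\}$. Write $\mathrm{dist}(z,\mathcal{Y})=\min_{y\in\mathcal{Y}}\|z-y\|$ and $[a]_+=\max(a,0)$. Assumptions: (A3) there is $G_g>0$ with $\|s\|\le G_g$ for all $s\in\partial g(x)$ and all $x\in R\mathbb{B}$; (A4) there are $\sigma,\epsilon>0$ such that $\{x:g(x)=-\epsilon\}$ is nonempty and $\|s\|\ge\sigma$ for all $s\in\partial g(x)$ whenever $g(x)=-\epsilon$. *)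

theory Defs
  imports "HOL-Analysis.Analysis"
begin

definition subdiff :: "('a::real_inner \<Rightarrow> real) \<Rightarrow> 'a \<Rightarrow> 'a set" where
  "subdiff g x = {s. \<forall>y. g y \<ge> g x + inner s (y - x)}"

end

theory Submission
  imports Defs
begin

lemma aux: "(- C) * (G1 + E) + A * (G + E) \<ge> (0::real) \<Longrightarrow> Z * A = G1 + E \<Longrightarrow> (Z * C) * A \<le> (G + E) * A"
proof -
  assume h: "(- C) * (G1 + E) + A * (G + E) \<ge> 0" "Z * A = G1 + E"
  have "(Z * C) * A = C * (G1 + E)" using h(2) by (simp add: mult.commute mult.left_commute)
  thus ?thesis using h(1) by (simp add: algebra_simps)
qed

lemma key:
  fixes g :: "'a::euclidean_space \<Rightarrow> real"
  assumes convex: "convex_on UNIV g"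
    and A4: "\<sigma> > 0" "\<epsilon> > 0" "{x. g x = - \<epsilon>} \<noteq> {}"
      "\<forall>x. g x = - \<epsilon> \<longrightarrow> (\<forall>s\<in>subdiff g x. norm s \<ge> \<sigma>)"
    and gx: "g x > - \<epsilon>"
  shows "\<exists>q. g q = - \<epsilon> \<and> \<sigma> * dist x q \<le> g x + \<epsilon>"
proof -
  let ?L = "{y. g y \<le> - \<epsilon>}"
  have cont: "continuous_on UNIV g"
    using convex_on_continuous[OF open_UNIV convex] .
  have closedL: "closed ?L"
    using closed_Collect_le[OF cont continuous_on_const] .
  have convL: "convex ?L"
    unfolding convex_def
  proof (intro ballI allI impI)
    fix y z :: 'a and a b :: real
    assume y: "y \<in> ?L" and z: "z \<in> ?L" and ab: "0 \<le> a" "0 \<le> b" "a + b = 1"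
    have "g ((1 - b) *\<^sub>R y + b *\<^sub>R z) \<le> (1 - b) * g y + b * g z"
      using convex_onD[OF convex, of b y z] ab by auto
    also have "\<dots> \<le> (1 - b) * (-\<epsilon>) + b * (-\<epsilon>)"
      using y z ab by (intro add_mono mult_left_mono) auto
    finally have "g ((1 - b) *\<^sub>R y + b *\<^sub>R z) \<le> - \<epsilon>" by (simp add: algebra_simps)
    moreover have "a = 1 - b" using ab by simp
    ultimately show "a *\<^sub>R y + b *\<^sub>R z \<in> ?L" by simp
  qed
  have Lne: "?L \<noteq> {}" using A4(3) by (auto intro: eq_refl)
  obtain q where q: "q \<in> ?L" and qmin: "\<And>y. y \<in> ?L \<Longrightarrow> dist x q \<le> dist x y"
    using distance_attains_inf[OF closedL Lne] by blast
  define u where "u = x - q"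
  have half: "\<And>y. y \<in> ?L \<Longrightarrow> inner u (y - q) \<le> 0"
    unfolding u_def
    by (rule any_closest_point_dot[OF convL closedL q]) (auto intro: qmin)
  have xL: "x \<notin> ?L" using gx by auto
  have unz: "u \<noteq> 0" using xL q unfolding u_def by auto
  have hyp: "g w \<ge> - \<epsilon>" if w: "inner u (w - q) = 0" for w
  proof (rule ccontr)
    assume "\<not> g w \<ge> - \<epsilon>"
    hence "w \<in> {y. g y < - \<epsilon>}" by auto
    moreover have "open {y. g y < - \<epsilon>}"
      using open_Collect_less[OF cont continuous_on_const] .
    ultimately obtain e where e: "e > 0" "ball w e \<subseteq> {y. g y < - \<epsilon>}"
      using open_contains_ball by blast
    define d where "d = e / (2 * norm u)"
    have d: "d > 0" using e unz by (simp add: d_def)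
    have "dist w (w + d *\<^sub>R u) = d * norm u" using d by (simp add: dist_norm)
    also have "\<dots> < e" using e unz by (simp add: d_def)
    finally have "w + d *\<^sub>R u \<in> ?L" using e by auto
    hence "inner u (w + d *\<^sub>R u - q) \<le> 0" by (rule half)
    moreover have "inner u (w + d *\<^sub>R u - q) = d * inner u u"
      using w by (simp add: inner_diff_right inner_add_right)
    moreover have "inner u u > 0" using unz by simp
    ultimately show False using d by (metis leD mult_pos_pos)
  qed
  have gq: "g q = - \<epsilon>" using q hyp[of q] by auto
  define A where "A = {(g y + \<epsilon>) / inner u (y - q) | y. inner u (y - q) > 0}"
  define l where "l = Inf A"
  have Apos: "inner u (y - q) > 0 \<Longrightarrow> g y > - \<epsilon>" for y
    using half[of y] by force
  have Apos': "inner u (y - q) > 0 \<Longrightarrow> 0 \<le> g y + \<epsilon>" for y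
    using Apos[of y] by linarith
  have xA: "inner u (x - q) > 0" using unz by (simp add: u_def)
  have Ane: "A \<noteq> {}" using xA unfolding A_def by blast
  have Abdd: "bdd_below A" unfolding A_def bdd_below_def
    by (rule exI[of _ 0]) (auto intro!: divide_nonneg_pos simp: less_imp_le Apos')
  have l0: "l \<ge> 0" unfolding l_def
    by (rule cInf_greatest[OF Ane]) (auto intro!: divide_nonneg_pos simp: A_def less_imp_le Apos')
  have two: "b * (g y1 + \<epsilon>) + a * (g y2 + \<epsilon>) \<ge> 0"
    if a: "a = inner u (y1 - q)" "a > 0" and b: "b = - inner u (y2 - q)" "b > 0" for a b y1 y2
  proof -
    define t where "t = a / (a + b)"
    have t: "0 \<le> t" "t \<le> 1" using a b by (auto simp: t_def)
    define w where "w = (1 - t) *\<^sub>R y1 + t *\<^sub>R y2"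
    have "inner u (w - q) = (1 - t) * inner u (y1 - q) + t * inner u (y2 - q)"
      unfolding w_def by (simp add: algebra_simps inner_diff_right inner_add_right)
    also have "\<dots> = (1 - t) * a - t * b" using a b by simp
    also have "\<dots> = 0" using a b by (simp add: t_def field_simps)
    finally have "g w \<ge> - \<epsilon>" by (rule hyp)
    also have "g w \<le> (1 - t) * g y1 + t * g y2"
      unfolding w_def using convex_onD[OF convex t] by simp
    finally have "0 \<le> (1 - t) * (g y1 + \<epsilon>) + t * (g y2 + \<epsilon>)" by (simp add: algebra_simps)
    hence "0 \<le> (a + b) * ((1 - t) * (g y1 + \<epsilon>) + t * (g y2 + \<epsilon>))"
      using a b by simp
    also have "\<dots> = ((a + b) * (1 - t)) * (g y1 + \<epsilon>) + ((a + b) * t) * (g y2 + \<epsilon>)"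
      by (simp add: algebra_simps)
    also have "(a + b) * (1 - t) = b" using a(2) b(2) by (simp add: t_def field_simps)
    also have "(a + b) * t = a" using a(2) b(2) by (simp add: t_def field_simps)
    finally show ?thesis .
  qed
  have sub: "l *\<^sub>R u \<in> subdiff g q"
    unfolding subdiff_def
  proof (intro CollectI allI)
    fix y
    consider "inner u (y - q) > 0" | "inner u (y - q) = 0" | "inner u (y - q) < 0" by linarith
    then show "g q + inner (l *\<^sub>R u) (y - q) \<le> g y"
    proof cases
      case 1
      have "l \<le> (g y + \<epsilon>) / inner u (y - q)" unfolding l_def
        by (rule cInf_lower[OF _ Abdd]) (use 1 in \<open>auto simp: A_def\<close>)
      hence "l * inner u (y - q) \<le> g y + \<epsilon>" using 1 by (simp add: pos_le_divide_eq)
      then show ?thesis using gq by simp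
    next
      case 2
      then show ?thesis using gq hyp[of y] by simp
    next
      case 3
      have "(g y + \<epsilon>) / inner u (y - q) \<le> l" unfolding l_def
      proof (rule cInf_greatest[OF Ane])
        fix z assume "z \<in> A"
        then obtain y1 where y1: "z = (g y1 + \<epsilon>) / inner u (y1 - q)" "inner u (y1 - q) > 0"
          unfolding A_def by blast
        have "(- inner u (y - q)) * (g y1 + \<epsilon>) + inner u (y1 - q) * (g y + \<epsilon>) \<ge> 0"
          using two[OF refl y1(2) refl] 3 by simp
        moreover have za: "z * inner u (y1 - q) = g y1 + \<epsilon>" using y1 by simp
        ultimately have "(z * inner u (y - q)) * inner u (y1 - q) \<le> (g y + \<epsilon>) * inner u (y1 - q)"
          by (rule aux)
        hence "z * inner u (y - q) \<le> g y + \<epsilon>"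
          using y1(2) by (rule mult_right_le_imp_le)
        then show "(g y + \<epsilon>) / inner u (y - q) \<le> z"
          using 3 by (simp add: neg_divide_le_eq)
      qed
      hence "l * inner u (y - q) \<le> g y + \<epsilon>" using 3
        by (simp add: neg_divide_le_eq)
      then show ?thesis using gq by simp
    qed
  qed
  have "norm (l *\<^sub>R u) \<ge> \<sigma>" using A4(4) gq sub by blast
  hence sl: "\<sigma> \<le> l * norm u" using l0 by simp
  have "g x \<ge> g q + inner (l *\<^sub>R u) (x - q)" using sub by (simp add: subdiff_def)
  hence "g x + \<epsilon> \<ge> l * (norm u * norm u)" using gq
    by (simp add: u_def power2_eq_square[symmetric] dot_square_norm)
  moreover have "\<sigma> * norm u \<le> l * norm u * norm u"
    using sl by (simp add: mult_right_mono)
  ultimately have "\<sigma> * norm u \<le> g x + \<epsilon>" by (simp add: mult.assoc)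
  thus ?thesis using gq by (auto simp: u_def dist_norm)
qed

theorem lemma1:
  fixes g :: "'a::euclidean_space \<Rightarrow> real"
    and R G\<^sub>g \<sigma> \<epsilon> \<rho> :: real
  assumes convex: "convex_on UNIV g"
    and R_pos: "R > 0"
    and X_sub: "{x. g x \<le> 0} \<subseteq> cball 0 R"
    and A3: "G\<^sub>g > 0" "\<forall>x\<in>cball 0 R. \<forall>s\<in>subdiff g x. norm s \<le> G\<^sub>g"
    and A4: "\<sigma> > 0" "\<epsilon> > 0" "{x. g x = - \<epsilon>} \<noteq> {}"
      "\<forall>x. g x = - \<epsilon> \<longrightarrow> (\<forall>s\<in>subdiff g x. norm s \<ge> \<sigma>)"
    and rho: "0 \<le> \<rho>" "\<rho> \<le> \<epsilon>"
  shows "\<forall>x\<in>cball 0 R. infdist x {y. g y \<le> - \<rho>} \<le> (1 / \<sigma>) * max (g x + \<rho>) 0"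
proof
  fix x :: 'a
  show "infdist x {y. g y \<le> - \<rho>} \<le> (1 / \<sigma>) * max (g x + \<rho>) 0"
  proof (cases "g x \<le> - \<rho>")
    case True
    then show ?thesis using A4(1) by simp
  next
    case False
    hence gx: "g x > - \<epsilon>" using rho by simp
    obtain q where q: "g q = - \<epsilon>" "\<sigma> * dist x q \<le> g x + \<epsilon>"
      using key[OF convex A4 gx] by blast
    define t where "t = (g x + \<rho>) / (g x + \<epsilon>)"
    have t: "0 \<le> t" "t \<le> 1" using False rho gx by (auto simp: t_def)
    define y where "y = (1 - t) *\<^sub>R x + t *\<^sub>R q"
    have "g y \<le> (1 - t) * g x + t * g q"
      unfolding y_def using convex_onD[OF convex t] by simp
    also have "\<dots> = g x - t * (g x + \<epsilon>)" using q by (simp add: algebra_simps)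
    also have "\<dots> = - \<rho>" using gx by (simp add: t_def)
    finally have yin: "y \<in> {y. g y \<le> - \<rho>}" by simp
    have "dist x y = t * dist x q"
    proof -
      have "x - y = t *\<^sub>R (x - q)" by (simp add: y_def algebra_simps)
      thus ?thesis using t by (simp add: dist_norm)
    qed
    also have "\<dots> \<le> t * ((g x + \<epsilon>) / \<sigma>)"
      using q A4(1) t by (intro mult_left_mono) (auto simp: pos_le_divide_eq mult.commute)
    also have "\<dots> = (1 / \<sigma>) * max (g x + \<rho>) 0"
      using gx False by (simp add: t_def)
    finally show ?thesis by (rule infdist_le2[OF yin])
  qed
qed

end
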